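(* Assume Hypotheses 1 and 2 (see context). For any $x_1=(a_1,z_1),x_2=(a_2,z_2)\in U$ and $t_0>0$, if $x_2\in\mathcal{C}(x_1)$, $\Phi([0,t_0],x_1)\subset U$ and $\Phi([0,t_0],x_2)\subset U$, then, writing $\Phi(t,x_i)=(\tilde a_i(t),\tilde z_i(t))$, we have $\|\tilde a_2(t)-\tilde a_1(t)\|\ge\|a_2-a_1\|e^{c_1t}$ for all $t\in[0,t_0]$.
   Context: System $\dot a=f(a,z)$, $\dot z=g(a,z)$, $(a,z)\in\mathbb{R}^n\times\mathbb{R}^m$, $x=(a,z)$, $X=\mathbb{R}^n\times\mathbb{R}^m$, with flow $\Phi(t,x)$; Euclidean inner product, norm, operator norm. $\mathcal{L}(x_1,x_2)=\|a_2-a_1\|^2-\|z_2-z_1\|^2$; $\mathcal{C}(x)=\{x'\in X:\mathcal{L}(x',x)\ge0\}$; $\mathbb{B}_d(x)=\{(a',z'):\|a'-a\|\le d,\|z'-z\|\le d\}$. Hypothesis 1: $U$ is open and convex, and there is $d>0$ with $\mathcal{C}(x)\cap U\subset\mathbb{B}_d(x)$ for all $x\in U$. Hypothesis 2: $f,g$ are $C^1$ on $U$; there exist a continuous positive $\alpha:U\to\mathbb{R}$, a continuous nonnegative $\ell:U\to\mathbb{R}$ and $c_1>0$ with, for all $x\in U$: $\langle a',D_af(x)a'\rangle\ge\alpha(x)\|a'\|^2$ for all $a'$; $\langle z',D_zg(x)z'\rangle\le\ell(x)\|z'\|^2$ for all $z'$; $\alpha(x)\ge\ell(x)+\|D_zf(x)\|+\|D_ag(x)\|+c_1$.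 *)

theory Defs
  imports "HOL-Analysis.Analysis"
begin

definition Lfun :: "((real^'n) \<times> (real^'m)) \<Rightarrow> ((real^'n) \<times> (real^'m)) \<Rightarrow> real" where
  "Lfun x1 x2 = (norm (fst x2 - fst x1))\<^sup>2 - (norm (snd x2 - snd x1))\<^sup>2"

definition cone :: "((real^'n) \<times> (real^'m)) \<Rightarrow> ((real^'n) \<times> (real^'m)) set" where
  "cone x = {x'. Lfun x' x \<ge> 0}"

definition boxB :: "real \<Rightarrow> ((real^'n) \<times> (real^'m)) \<Rightarrow> ((real^'n) \<times> (real^'m)) set" where
  "boxB d x = {x'. norm (fst x' - fst x) \<le> d \<and> norm (snd x' - snd x) \<le> d}"

definition is_traj ::
  "(((real^'n) \<times> (real^'m)) \<Rightarrow> real^'n) \<Rightarrow> (((real^'n) \<times> (real^'m)) \<Rightarrow> real^'m)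
   \<Rightarrow> real \<Rightarrow> ((real^'n) \<times> (real^'m)) \<Rightarrow> (real \<Rightarrow> (real^'n) \<times> (real^'m)) \<Rightarrow> bool" where
  "is_traj f g t0 x0 y \<longleftrightarrow> y 0 = x0 \<and>
     (\<forall>t\<in>{0..t0}. (y has_vector_derivative (f (y t), g (y t))) (at t within {0..t0}))"

end

theory Submission
  imports Defs
begin

lemma grow:
  fixes N N' :: "real \<Rightarrow> real"
  assumes ab: "a \<le> b" and cont: "continuous_on {a..b} N"
    and der: "\<And>t. a < t \<Longrightarrow> t < b \<Longrightarrow> (N has_real_derivative N' t) (at t) \<and> N' t \<ge> k * N t"
  shows "N a * exp (- k * a) \<le> N b * exp (- k * b)"
proof (rule DERIV_nonneg_imp_increasing_open[OF ab])
  fix t assume t: "a < t" "t < b"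
  have "((\<lambda>t. N t * exp (- k * t)) has_real_derivative N' t * exp (- k * t) + N t * (exp (- k * t) * (- k))) (at t)"
    using der[OF t] by (auto intro!: derivative_eq_intros)
  moreover have "N' t * exp (- k * t) + N t * (exp (- k * t) * (- k)) = (N' t - k * N t) * exp (- k * t)"
    by (simp add: algebra_simps)
  moreover have "(N' t - k * N t) * exp (- k * t) \<ge> 0" using der[OF t] by simp
  ultimately show "\<exists>y. ((\<lambda>t. N t * exp (- k * t)) has_real_derivative y) (at t) \<and> 0 \<le> y" by auto
next
  show "continuous_on {a..b} (\<lambda>t. N t * exp (- k * t))"
    using cont by (auto intro!: continuous_intros)
qed

lemma est:
  fixes D :: "('a::real_inner \<times> 'b::real_inner) \<Rightarrow>\<^sub>L 'a" and G :: "('a \<times> 'b) \<Rightarrow>\<^sub>L 'b"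
  assumes Ha: "\<forall>a'. inner a' (D (a', 0)) \<ge> al * (norm a')\<^sup>2"
    and Hz: "\<forall>z'. inner z' (G (0, z')) \<le> el * (norm z')\<^sup>2"
  shows "inner a (D (a, z)) \<ge> al * (norm a)\<^sup>2 - onorm (\<lambda>z'. D (0, z')) * norm a * norm z"
    and "inner a (D (a, z)) - inner z (G (a, z)) \<ge> al * (norm a)\<^sup>2 - onorm (\<lambda>z'. D (0, z')) * norm a * norm z
            - onorm (\<lambda>a'. G (a', 0)) * norm a * norm z - el * (norm z)\<^sup>2"
proof -
  have bl1: "bounded_linear (\<lambda>z'. D (0::'a, z'))"
    by (rule bounded_linear_compose[OF blinfun.bounded_linear_right]) (intro bounded_linear_Pair bounded_linear_zero bounded_linear_ident)
  have bl2: "bounded_linear (\<lambda>a'. G (a', 0::'b))"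
    by (rule bounded_linear_compose[OF blinfun.bounded_linear_right]) (intro bounded_linear_Pair bounded_linear_zero bounded_linear_ident)
  have sp: "(a, z) = (a, 0) + (0, z)" by simp
  have eD: "D (a, z) = D (a, 0) + D (0, z)" by (metis sp blinfun.add_right)
  have eG: "G (a, z) = G (a, 0) + G (0, z)" by (metis sp blinfun.add_right)
  have n1: "norm (D (0, z)) \<le> onorm (\<lambda>z'. D (0, z')) * norm z" using onorm[OF bl1] by simp
  have n2: "norm (G (a, 0)) \<le> onorm (\<lambda>a'. G (a', 0)) * norm a" using onorm[OF bl2] by simp
  have c1: "inner a (D (0, z)) \<ge> - (norm a * (onorm (\<lambda>z'. D (0, z')) * norm z))"
  proof -
    have "\<bar>inner a (D (0, z))\<bar> \<le> norm a * norm (D (0, z))" by (rule Cauchy_Schwarz_ineq2)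
    also have "\<dots> \<le> norm a * (onorm (\<lambda>z'. D (0, z')) * norm z)" by (rule mult_left_mono[OF n1]) simp
    finally show ?thesis by linarith
  qed
  have c2: "inner z (G (a, 0)) \<le> norm z * (onorm (\<lambda>a'. G (a', 0)) * norm a)"
  proof -
    have "\<bar>inner z (G (a, 0))\<bar> \<le> norm z * norm (G (a, 0))" by (rule Cauchy_Schwarz_ineq2)
    also have "\<dots> \<le> norm z * (onorm (\<lambda>a'. G (a', 0)) * norm a)" by (rule mult_left_mono[OF n2]) simp
    finally show ?thesis by linarith
  qed
  have A: "inner a (D (a, 0)) \<ge> al * (norm a)\<^sup>2" using Ha by auto
  have Z: "inner z (G (0, z)) \<le> el * (norm z)\<^sup>2" using Hz by auto
  show "inner a (D (a, z)) \<ge> al * (norm a)\<^sup>2 - onorm (\<lambda>z'. D (0, z')) * norm a * norm z"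
    using A c1 by (simp add: eD inner_add_right algebra_simps)
  show "inner a (D (a, z)) - inner z (G (a, z)) \<ge> al * (norm a)\<^sup>2 - onorm (\<lambda>z'. D (0, z')) * norm a * norm z
            - onorm (\<lambda>a'. G (a', 0)) * norm a * norm z - el * (norm z)\<^sup>2"
    using A c1 c2 Z by (simp add: eD eG inner_add_right algebra_simps)
qed

lemma arith1:
  fixes al el p q c A Z M :: real
  assumes "al \<ge> el + p + q + c" "el \<ge> 0" "p \<ge> 0" "q \<ge> 0" "A \<ge> 0" "Z \<ge> 0" "al \<le> M" "c \<ge> 0"
  shows "al * A\<^sup>2 - p * A * Z - q * A * Z - el * Z\<^sup>2 \<ge> c * A\<^sup>2 + min 0 (M * (A\<^sup>2 - Z\<^sup>2))"
proof (cases "Z \<le> A")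
  case True
  have "p * A * Z \<le> p * A * A" "q * A * Z \<le> q * A * A" "el * Z\<^sup>2 \<le> el * A\<^sup>2"
    using True assms by (auto intro!: mult_left_mono power_mono simp: mult_nonneg_nonneg)
  moreover have "al * A\<^sup>2 \<ge> (el + p + q + c) * A\<^sup>2" using assms by (intro mult_right_mono) auto
  ultimately show ?thesis by (simp add: power2_eq_square algebra_simps)
next
  case False
  have "p * A * Z \<le> p * Z * Z" "q * A * Z \<le> q * Z * Z"
    using False assms by (auto intro!: mult_left_mono mult_right_mono simp: mult_nonneg_nonneg)
  moreover have "al * A\<^sup>2 \<ge> (el + p + q + c) * A\<^sup>2" using assms by (intro mult_right_mono) auto
  moreover have "(el + p + q) * (A\<^sup>2 - Z\<^sup>2) \<ge> M * (A\<^sup>2 - Z\<^sup>2)"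
  proof -
    have "A\<^sup>2 - Z\<^sup>2 \<le> 0" using False assms by (simp add: power_mono)
    moreover have "el + p + q \<le> M" using assms by linarith
    ultimately show ?thesis using mult_right_mono_neg by blast
  qed
  ultimately show ?thesis by (simp add: power2_eq_square algebra_simps)
qed

lemma arith2:
  fixes al el p q c A Z :: real
  assumes "al \<ge> el + p + q + c" "el \<ge> 0" "p \<ge> 0" "q \<ge> 0" "A \<ge> 0" "Z \<ge> 0" "Z \<le> A"
  shows "al * A\<^sup>2 - p * A * Z \<ge> c * A\<^sup>2"
proof -
  have "p * A * Z \<le> p * A * A" using assms by (auto intro!: mult_left_mono simp: mult_nonneg_nonneg)
  moreover have "al * A\<^sup>2 \<ge> (p + c) * A\<^sup>2" using assms by (intro mult_right_mono) auto
  ultimately show ?thesis by (simp add: power2_eq_square algebra_simps)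
qed

lemma seg_mvt:
  fixes F :: "'a::real_normed_vector \<Rightarrow> 'b::real_inner"
  assumes cvx: "convex U" and pU: "p \<in> U" and qU: "q \<in> U"
    and D: "\<forall>x\<in>U. (F has_derivative DF x) (at x)"
  shows "\<exists>s\<in>{0..1}. p + s *\<^sub>R (q - p) \<in> U \<and> inner c (F q - F p) = inner c (DF (p + s *\<^sub>R (q - p)) (q - p))"
proof -
  have mem: "p + s *\<^sub>R (q - p) \<in> U" if "s \<in> {0..1}" for s
  proof -
    have "p + s *\<^sub>R (q - p) = (1 - s) *\<^sub>R p + s *\<^sub>R q" by (simp add: algebra_simps)
    moreover have "(1 - s) *\<^sub>R p + s *\<^sub>R q \<in> U"
      using that cvx pU qU unfolding convex_def by auto
    ultimately show ?thesis by simp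
  qed
  have der: "((\<lambda>s. inner c (F (p + s *\<^sub>R (q - p)))) has_derivative
      (\<lambda>h. inner c (DF (p + s *\<^sub>R (q - p)) (h *\<^sub>R (q - p))))) (at s within {0..1})"
    if "0 \<le> s" "s \<le> 1" for s
  proof -
    have d1: "(F has_derivative DF (p + s *\<^sub>R (q - p))) (at (p + s *\<^sub>R (q - p)))"
      using D mem that by auto
    have d2: "((\<lambda>s. p + s *\<^sub>R (q - p)) has_derivative (\<lambda>h. h *\<^sub>R (q - p))) (at s within {0..1})"
      by (auto intro!: derivative_eq_intros)
    have "((\<lambda>s. F (p + s *\<^sub>R (q - p))) has_derivative (\<lambda>h. DF (p + s *\<^sub>R (q - p)) (h *\<^sub>R (q - p)))) (at s within {0..1})"
      using has_derivative_in_compose[OF d2 has_derivative_at_withinI[OF d1]] by (simp add: o_def)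
    then show ?thesis by (auto intro!: derivative_eq_intros)
  qed
  obtain s where s: "s \<in> {0<..<1}" and eq: "inner c (F (p + 1 *\<^sub>R (q - p))) - inner c (F (p + 0 *\<^sub>R (q - p)))
     = inner c (DF (p + s *\<^sub>R (q - p)) ((1 - 0) *\<^sub>R (q - p)))"
    using mvt_simple[of 0 1 "\<lambda>s. inner c (F (p + s *\<^sub>R (q - p)))", OF _ der] by auto
  show ?thesis
    apply (rule bexI[of _ s])
    using s eq mem[of s] by (auto simp: inner_diff_right)
qed
theorem lemma2p2:
  fixes f :: "(real^'n) \<times> (real^'m) \<Rightarrow> real^'n"
    and g :: "(real^'n) \<times> (real^'m) \<Rightarrow> real^'m"
    and Df :: "(real^'n) \<times> (real^'m) \<Rightarrow> ((real^'n) \<times> (real^'m)) \<Rightarrow>\<^sub>L (real^'n)"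
    and Dg :: "(real^'n) \<times> (real^'m) \<Rightarrow> ((real^'n) \<times> (real^'m)) \<Rightarrow>\<^sub>L (real^'m)"
    and U :: "((real^'n) \<times> (real^'m)) set"
    and alpha ell :: "(real^'n) \<times> (real^'m) \<Rightarrow> real"
    and c1 d t0 :: real
    and x1 x2 :: "(real^'n) \<times> (real^'m)"
    and y1 y2 :: "real \<Rightarrow> (real^'n) \<times> (real^'m)"
  assumes H1_open: "open U" and H1_convex: "convex U"
    and H1_d: "d > 0" and H1_cone: "\<forall>x\<in>U. cone x \<inter> U \<subseteq> boxB d x"
    and Df: "\<forall>x\<in>U. (f has_derivative blinfun_apply (Df x)) (at x)"
    and Df_cont: "continuous_on U Df"
    and Dg: "\<forall>x\<in>U. (g has_derivative blinfun_apply (Dg x)) (at x)"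
    and Dg_cont: "continuous_on U Dg"
    and alpha_cont: "continuous_on U alpha" and alpha_pos: "\<forall>x\<in>U. alpha x > 0"
    and ell_cont: "continuous_on U ell" and ell_nonneg: "\<forall>x\<in>U. ell x \<ge> 0"
    and c1_pos: "c1 > 0"
    and H2_a: "\<forall>x\<in>U. \<forall>a'. inner a' (Df x (a', 0)) \<ge> alpha x * (norm a')\<^sup>2"
    and H2_z: "\<forall>x\<in>U. \<forall>z'. inner z' (Dg x (0, z')) \<le> ell x * (norm z')\<^sup>2"
    and H2_ineq: "\<forall>x\<in>U. alpha x \<ge> ell x + onorm (\<lambda>z'. Df x (0, z')) + onorm (\<lambda>a'. Dg x (a', 0)) + c1"
    and x1U: "x1 \<in> U" and x2U: "x2 \<in> U" and t0_pos: "t0 > 0"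
    and x2_cone: "x2 \<in> cone x1"
    and traj1: "is_traj f g t0 x1 y1" and traj1U: "y1 ` {0..t0} \<subseteq> U"
    and traj2: "is_traj f g t0 x2 y2" and traj2U: "y2 ` {0..t0} \<subseteq> U"
  shows "\<forall>t\<in>{0..t0}. norm (fst (y2 t) - fst (y1 t)) \<ge> norm (fst x2 - fst x1) * exp (c1 * t)"
proof -
  have cvx: "convex U" by (rule H1_convex)
  have y1_0: "y1 0 = x1" and y1d: "\<And>t. t \<in> {0..t0} \<Longrightarrow> (y1 has_vector_derivative (f (y1 t), g (y1 t))) (at t within {0..t0})"
    using traj1 unfolding is_traj_def by auto
  have y2_0: "y2 0 = x2" and y2d: "\<And>t. t \<in> {0..t0} \<Longrightarrow> (y2 has_vector_derivative (f (y2 t), g (y2 t))) (at t within {0..t0})"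
    using traj2 unfolding is_traj_def by auto
  have y1c: "continuous_on {0..t0} y1"
    unfolding continuous_on_eq_continuous_within using y1d has_vector_derivative_continuous by blast
  have y2c: "continuous_on {0..t0} y2"
    unfolding continuous_on_eq_continuous_within using y2d has_vector_derivative_continuous by blast
  define w where "w t = y2 t - y1 t" for t
  define Da where "Da t = fst (y2 t) - fst (y1 t)" for t
  define Dz where "Dz t = snd (y2 t) - snd (y1 t)" for t
  have wD: "w t = (Da t, Dz t)" for t by (simp add: w_def Da_def Dz_def prod_eq_iff)
  define L where "L t = (norm (Da t))\<^sup>2 - (norm (Dz t))\<^sup>2" for t
  define N where "N t = (norm (Da t))\<^sup>2" for t
  define dv where "dv t = (f (y2 t) - f (y1 t), g (y2 t) - g (y1 t))" for t
  define dL where "dL t = 2 * (inner (Da t) (f (y2 t) - f (y1 t)) - inner (Dz t) (g (y2 t) - g (y1 t)))" for t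
  define dN where "dN t = 2 * inner (Da t) (f (y2 t) - f (y1 t))" for t
  have wd: "(w has_vector_derivative dv t) (at t)" if "0 < t" "t < t0" for t
  proof -
    have "t \<in> {0..t0}" using that by auto
    then have "(y1 has_vector_derivative (f (y1 t), g (y1 t))) (at t within {0..t0})" "(y2 has_vector_derivative (f (y2 t), g (y2 t))) (at t within {0..t0})"
      using y1d y2d by auto
    then have "(y1 has_vector_derivative (f (y1 t), g (y1 t))) (at t)" "(y2 has_vector_derivative (f (y2 t), g (y2 t))) (at t)"
      unfolding at_within_Icc_at[OF that] .
    then show ?thesis unfolding w_def[abs_def] dv_def
      by (auto intro!: derivative_eq_intros)
  qed
  have Lw: "L t = (norm (fst (w t)))\<^sup>2 - (norm (snd (w t)))\<^sup>2" for t by (simp add: L_def wD)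
  have Nw: "N t = (norm (fst (w t)))\<^sup>2" for t by (simp add: N_def wD)
  have Ld: "(L has_real_derivative dL t) (at t)" if "0 < t" "t < t0" for t
  proof -
    have "(w has_derivative (\<lambda>h. h *\<^sub>R dv t)) (at t)" using wd[OF that] by (simp add: has_vector_derivative_def)
    then have "((\<lambda>t. inner (fst (w t)) (fst (w t)) - inner (snd (w t)) (snd (w t))) has_derivative
       (\<lambda>h. inner (fst (h *\<^sub>R dv t)) (fst (w t)) + inner (fst (w t)) (fst (h *\<^sub>R dv t))
          - (inner (snd (h *\<^sub>R dv t)) (snd (w t)) + inner (snd (w t)) (snd (h *\<^sub>R dv t))))) (at t)"
      by (auto intro!: derivative_eq_intros)
    moreover have "(\<lambda>h. inner (fst (h *\<^sub>R dv t)) (fst (w t)) + inner (fst (w t)) (fst (h *\<^sub>R dv t))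
          - (inner (snd (h *\<^sub>R dv t)) (snd (w t)) + inner (snd (w t)) (snd (h *\<^sub>R dv t)))) = (\<lambda>h. h * dL t)"
      by (auto simp: fun_eq_iff dL_def dv_def wD inner_commute algebra_simps)
    moreover have "(\<lambda>t. inner (fst (w t)) (fst (w t)) - inner (snd (w t)) (snd (w t))) = L"
      by (auto simp: fun_eq_iff Lw power2_norm_eq_inner)
    ultimately have "(L has_derivative (\<lambda>h. h * dL t)) (at t)" by simp
    then show ?thesis by (simp add: has_field_derivative_def mult_commute_abs)
  qed
  have Nd: "(N has_real_derivative dN t) (at t)" if "0 < t" "t < t0" for t
  proof -
    have "(w has_derivative (\<lambda>h. h *\<^sub>R dv t)) (at t)" using wd[OF that] by (simp add: has_vector_derivative_def)
    then have "((\<lambda>t. inner (fst (w t)) (fst (w t))) has_derivative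
       (\<lambda>h. inner (fst (h *\<^sub>R dv t)) (fst (w t)) + inner (fst (w t)) (fst (h *\<^sub>R dv t)))) (at t)"
      by (auto intro!: derivative_eq_intros)
    moreover have "(\<lambda>h. inner (fst (h *\<^sub>R dv t)) (fst (w t)) + inner (fst (w t)) (fst (h *\<^sub>R dv t))) = (\<lambda>h. h * dN t)"
      by (auto simp: fun_eq_iff dN_def dv_def wD inner_commute algebra_simps)
    moreover have "(\<lambda>t. inner (fst (w t)) (fst (w t))) = N"
      by (auto simp: fun_eq_iff Nw power2_norm_eq_inner)
    ultimately have "(N has_derivative (\<lambda>h. h * dN t)) (at t)" by simp
    then show ?thesis by (simp add: has_field_derivative_def mult_commute_abs)
  qed
  have Lc: "continuous_on {0..t0} L"
    unfolding L_def Da_def Dz_def using y1c y2c by (auto intro!: continuous_intros)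
  have Nc: "continuous_on {0..t0} N"
    unfolding N_def Da_def using y1c y2c by (auto intro!: continuous_intros)
  obtain M where M0: "M \<ge> 0" and Mb: "\<forall>t\<in>{0..t0}. \<forall>s\<in>{0..1}. alpha (y1 t + s *\<^sub>R (y2 t - y1 t)) \<le> M"
  proof -
    define K0 where "K0 = (\<lambda>p. y1 (fst p) + snd p *\<^sub>R (y2 (fst p) - y1 (fst p))) ` ({0..t0} \<times> {0..1::real})"
    have c1': "continuous_on ({0..t0} \<times> {0..1::real}) (\<lambda>p. y1 (fst p))"
      by (rule continuous_on_compose2[OF y1c continuous_on_fst]) auto
    have c2': "continuous_on ({0..t0} \<times> {0..1::real}) (\<lambda>p. y2 (fst p))"
      by (rule continuous_on_compose2[OF y2c continuous_on_fst]) auto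
    have "compact K0" unfolding K0_def
      by (rule compact_continuous_image) (use c1' c2' in \<open>auto intro!: continuous_intros compact_Times\<close>)
    moreover have "K0 \<subseteq> U"
    proof
      fix x assume "x \<in> K0"
      then obtain t s where ts: "t \<in> {0..t0}" "s \<in> {0..1::real}" and x: "x = y1 t + s *\<^sub>R (y2 t - y1 t)"
        unfolding K0_def by auto
      have "x = (1 - s) *\<^sub>R y1 t + s *\<^sub>R y2 t" by (simp add: x algebra_simps)
      moreover have "y1 t \<in> U" "y2 t \<in> U" using ts traj1U traj2U by auto
      ultimately show "x \<in> U" using cvx ts unfolding convex_def by auto
    qed
    ultimately have "compact (alpha ` K0)"
      using alpha_cont by (meson compact_continuous_image continuous_on_subset)
    then obtain B where B: "\<forall>v\<in>alpha ` K0. norm v \<le> B"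
      using compact_imp_bounded bounded_iff by metis
    show ?thesis
    proof (rule that[of "max B 0"])
      show "\<forall>t\<in>{0..t0}. \<forall>s\<in>{0..1}. alpha (y1 t + s *\<^sub>R (y2 t - y1 t)) \<le> max B 0"
      proof (intro ballI)
        fix t s assume "t \<in> {0..t0}" "(s::real) \<in> {0..1}"
        then have "y1 t + s *\<^sub>R (y2 t - y1 t) \<in> K0" unfolding K0_def by force
        then show "alpha (y1 t + s *\<^sub>R (y2 t - y1 t)) \<le> max B 0" using B by force
      qed
    qed simp
  qed
  have ptL: "\<exists>x\<in>U. alpha x \<le> M \<and> dL t = 2 * (inner (Da t) (Df x (Da t, Dz t)) - inner (Dz t) (Dg x (Da t, Dz t)))"
    if "t \<in> {0..t0}" for t
  proof -
    have pU: "y1 t \<in> U" "y2 t \<in> U" using that traj1U traj2U by auto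
    have D: "\<forall>x\<in>U. ((\<lambda>x. (f x, g x)) has_derivative (\<lambda>h. (Df x h, Dg x h))) (at x)"
      using Df Dg by (auto intro!: has_derivative_Pair)
    obtain s where s: "s \<in> {0..1}" and xU: "y1 t + s *\<^sub>R (y2 t - y1 t) \<in> U"
      and eq: "inner (Da t, - Dz t) ((f (y2 t), g (y2 t)) - (f (y1 t), g (y1 t)))
         = inner (Da t, - Dz t) ((\<lambda>h. (Df (y1 t + s *\<^sub>R (y2 t - y1 t)) h, Dg (y1 t + s *\<^sub>R (y2 t - y1 t)) h)) (y2 t - y1 t))"
      using seg_mvt[OF cvx pU D, of "(Da t, - Dz t)"] by blast
    have wt: "y2 t - y1 t = (Da t, Dz t)" using wD[of t] by (simp add: w_def)
    show ?thesis
      apply (rule bexI[OF _ xU])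
      using eq Mb that s by (simp only: wt[symmetric]) (simp add: wt dL_def)
  qed
  have ptN: "\<exists>x\<in>U. dN t = 2 * inner (Da t) (Df x (Da t, Dz t))"
    if "t \<in> {0..t0}" for t
  proof -
    have pU: "y1 t \<in> U" "y2 t \<in> U" using that traj1U traj2U by auto
    obtain s where s: "s \<in> {0..1}" and xU: "y1 t + s *\<^sub>R (y2 t - y1 t) \<in> U"
      and eq: "inner (Da t) (f (y2 t) - f (y1 t))
         = inner (Da t) (Df (y1 t + s *\<^sub>R (y2 t - y1 t)) (y2 t - y1 t))"
      using seg_mvt[OF cvx pU Df, of "Da t"] by blast
    have wt: "y2 t - y1 t = (Da t, Dz t)" using wD[of t] by (simp add: w_def)
    show ?thesis
      apply (rule bexI[OF _ xU])
      using eq by (simp add: wt dN_def)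
  qed
  have pt1: "dL t \<ge> 2 * (c1 * (norm (Da t))\<^sup>2 + min 0 (M * L t))"
           "norm (Dz t) \<le> norm (Da t) \<Longrightarrow> dN t \<ge> 2 * c1 * N t" if tt: "t \<in> {0..t0}" for t
  proof -
    obtain x where xU: "x \<in> U" and aM: "alpha x \<le> M"
      and eL: "dL t = 2 * (inner (Da t) (Df x (Da t, Dz t)) - inner (Dz t) (Dg x (Da t, Dz t)))"
      using ptL[OF tt] by blast
    have blz: "bounded_linear (\<lambda>z'. Df x (0, z'))"
      by (rule bounded_linear_compose[OF blinfun.bounded_linear_right]) (intro bounded_linear_Pair bounded_linear_zero bounded_linear_ident)
    have bla: "bounded_linear (\<lambda>a'. Dg x (a', 0))"
      by (rule bounded_linear_compose[OF blinfun.bounded_linear_right]) (intro bounded_linear_Pair bounded_linear_zero bounded_linear_ident)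
    note E = est[where D="Df x" and G="Dg x" and al="alpha x" and el="ell x" and a="Da t" and z="Dz t"]
    have Ha: "\<forall>a'. inner a' (Df x (a', 0)) \<ge> alpha x * (norm a')\<^sup>2" using H2_a xU by blast
    have Hz: "\<forall>z'. inner z' (Dg x (0, z')) \<le> ell x * (norm z')\<^sup>2" using H2_z xU by blast
    have ineq: "alpha x \<ge> ell x + onorm (\<lambda>z'. Df x (0, z')) + onorm (\<lambda>a'. Dg x (a', 0)) + c1"
      using H2_ineq xU by blast
    have A1: "alpha x * (norm (Da t))\<^sup>2 - onorm (\<lambda>z'. Df x (0, z')) * norm (Da t) * norm (Dz t)
            - onorm (\<lambda>a'. Dg x (a', 0)) * norm (Da t) * norm (Dz t) - ell x * (norm (Dz t))\<^sup>2
          \<ge> c1 * (norm (Da t))\<^sup>2 + min 0 (M * ((norm (Da t))\<^sup>2 - (norm (Dz t))\<^sup>2))"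
      by (rule arith1[OF ineq]) (use ell_nonneg xU onorm_pos_le[OF blz] onorm_pos_le[OF bla] aM c1_pos in auto)
    show "dL t \<ge> 2 * (c1 * (norm (Da t))\<^sup>2 + min 0 (M * L t))"
    proof -
      have "c1 * (norm (Da t))\<^sup>2 + min 0 (M * ((norm (Da t))\<^sup>2 - (norm (Dz t))\<^sup>2))
         \<le> inner (Da t) (Df x (Da t, Dz t)) - inner (Dz t) (Dg x (Da t, Dz t))"
        by (rule order_trans[OF A1 E(2)[OF Ha Hz]])
      then show ?thesis unfolding eL L_def by simp
    qed
    assume le: "norm (Dz t) \<le> norm (Da t)"
    obtain x where xU: "x \<in> U" and eN: "dN t = 2 * inner (Da t) (Df x (Da t, Dz t))"
      using ptN[OF tt] by blast
    have blz: "bounded_linear (\<lambda>z'. Df x (0, z'))"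
      by (rule bounded_linear_compose[OF blinfun.bounded_linear_right]) (intro bounded_linear_Pair bounded_linear_zero bounded_linear_ident)
    have bla: "bounded_linear (\<lambda>a'. Dg x (a', 0))"
      by (rule bounded_linear_compose[OF blinfun.bounded_linear_right]) (intro bounded_linear_Pair bounded_linear_zero bounded_linear_ident)
    note E = est[where D="Df x" and G="Dg x" and al="alpha x" and el="ell x" and a="Da t" and z="Dz t"]
    have Ha: "\<forall>a'. inner a' (Df x (a', 0)) \<ge> alpha x * (norm a')\<^sup>2" using H2_a xU by blast
    have Hz: "\<forall>z'. inner z' (Dg x (0, z')) \<le> ell x * (norm z')\<^sup>2" using H2_z xU by blast
    have ineq: "alpha x \<ge> ell x + onorm (\<lambda>z'. Df x (0, z')) + onorm (\<lambda>a'. Dg x (a', 0)) + c1"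
      using H2_ineq xU by blast
    have A2: "alpha x * (norm (Da t))\<^sup>2 - onorm (\<lambda>z'. Df x (0, z')) * norm (Da t) * norm (Dz t) \<ge> c1 * (norm (Da t))\<^sup>2"
      by (rule arith2[OF ineq]) (use ell_nonneg xU onorm_pos_le[OF blz] onorm_pos_le[OF bla] le in auto)
    show "dN t \<ge> 2 * c1 * N t"
    proof -
      have "c1 * (norm (Da t))\<^sup>2 \<le> inner (Da t) (Df x (Da t, Dz t))"
        by (rule order_trans[OF A2 E(1)[OF Ha Hz]])
      then show ?thesis unfolding eN N_def by simp
    qed
  qed
  have L0: "L 0 \<ge> 0"
    using x2_cone unfolding cone_def Lfun_def L_def Da_def Dz_def y1_0 y2_0
    by (simp add: norm_minus_commute)
  have Lpos: "L t \<ge> 0" if "t \<in> {0..t0}" for t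
  proof (rule ccontr)
    assume neg: "\<not> L t \<ge> 0"
    define S where "S = {0..t} \<inter> L -` {0..}"
    have Lct: "continuous_on {0..t} L" using Lc that by (auto intro: continuous_on_subset)
    have "closed S" unfolding S_def by (rule continuous_closed_preimage[OF Lct]) auto
    moreover have "0 \<in> S" using L0 that by (auto simp: S_def)
    moreover have bdd: "bdd_above S" unfolding S_def by (auto intro: bdd_aboveI[of _ t])
    ultimately have s0S: "Sup S \<in> S" using closed_contains_Sup by blast
    have s0le: "0 \<le> Sup S" "Sup S \<le> t" using s0S by (auto simp: S_def)
    have s0ne: "Sup S \<noteq> t" using s0S neg by (auto simp: S_def)
    have negs: "L u < 0" if "Sup S < u" "u \<le> t" for u
    proof (rule ccontr)
      assume "\<not> L u < 0"
      then have "u \<in> S" using that s0le by (auto simp: S_def)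
      then have "u \<le> Sup S" using bdd by (rule cSup_upper)
      then show False using that by simp
    qed
    have "L (Sup S) * exp (- (2 * M) * Sup S) \<le> L t * exp (- (2 * M) * t)"
    proof (rule grow[where N' = dL])
      show "Sup S \<le> t" by (rule s0le)
      show "continuous_on {Sup S..t} L" using Lc s0le that by (auto intro: continuous_on_subset)
      fix u assume u: "Sup S < u" "u < t"
      have u0: "0 < u" "u < t0" using u s0le that by auto
      have "dL u \<ge> 2 * (c1 * (norm (Da u))\<^sup>2 + min 0 (M * L u))" using pt1(1)[of u] u0 by auto
      moreover have "M * L u \<le> 0" using negs[of u] u M0 by (simp add: mult_nonneg_nonpos)
      moreover have "c1 * (norm (Da u))\<^sup>2 \<ge> 0" using c1_pos by simp
      ultimately have "dL u \<ge> 2 * (M * L u)" by (simp add: min_absorb2)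
      then have "dL u \<ge> 2 * M * L u" by (simp add: mult.assoc)
      then show "(L has_real_derivative dL u) (at u) \<and> 2 * M * L u \<le> dL u" using Ld[OF u0] by simp
    qed
    moreover have "L (Sup S) \<ge> 0" using s0S by (auto simp: S_def)
    ultimately have "L t * exp (- (2 * M) * t) \<ge> 0" by (meson mult_nonneg_nonneg exp_ge_zero order_trans)
    then have "L t \<ge> 0" by (simp add: zero_le_mult_iff)
    then show False using neg by simp
  qed
  show ?thesis
  proof
    fix t assume t: "t \<in> {0..t0}"
    have "N 0 * exp (- (2 * c1) * 0) \<le> N t * exp (- (2 * c1) * t)"
    proof (rule grow[where N' = dN])
      show "0 \<le> t" using t by simp
      show "continuous_on {0..t} N" using Nc t by (auto intro: continuous_on_subset)
      fix u assume u: "0 < u" "u < t"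
      have u0: "0 < u" "u < t0" "u \<in> {0..t0}" using u t by auto
      have "(norm (Dz u))\<^sup>2 \<le> (norm (Da u))\<^sup>2" using Lpos[OF u0(3)] by (simp add: L_def)
      then have "norm (Dz u) \<le> norm (Da u)" by (rule power2_le_imp_le) simp
      then have "dN u \<ge> 2 * c1 * N u" using pt1(2)[OF u0(3)] by simp
      then show "(N has_real_derivative dN u) (at u) \<and> 2 * c1 * N u \<le> dN u" using Nd[OF u0(1,2)] by simp
    qed
    then have "N 0 * exp (2 * c1 * t) \<le> N t"
      by (simp add: exp_minus field_simps)
    moreover have "exp (2 * c1 * t) = (exp (c1 * t))\<^sup>2"
    proof -
      have "exp (2 * c1 * t) = exp (c1 * t + c1 * t)" by (simp add: algebra_simps)
      then show ?thesis by (metis exp_add power2_eq_square)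
    qed
    then have "N 0 * exp (2 * c1 * t) = (norm (fst x2 - fst x1) * exp (c1 * t))\<^sup>2"
      by (simp add: N_def Da_def y1_0 y2_0 power_mult_distrib mult_exp_exp[symmetric])
    ultimately have "(norm (fst x2 - fst x1) * exp (c1 * t))\<^sup>2 \<le> (norm (Da t))\<^sup>2" by (simp add: N_def)
    then have "norm (fst x2 - fst x1) * exp (c1 * t) \<le> norm (Da t)" by (rule power2_le_imp_le) simp
    then show "norm (fst (y2 t) - fst (y1 t)) \<ge> norm (fst x2 - fst x1) * exp (c1 * t)" by (simp add: Da_def)
  qed
qed
end
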